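(* Let $A$ be a finite alphabet, let $x_1x_2x_3\dots$ be an infinite sequence of letters of $A$, let $m\ge 1$, and let $\varphi_1,\dots,\varphi_m$ be data compressors, i.e. maps from finite words over $A$ to finite binary words. Assume that for every $i=1,\dots,m$ the limit $$\lambda_i=\lim_{n\to\infty}\frac{|\varphi_i(x_1x_2\dots x_n)|}{n}$$ exists. Fix $\delta>0$ and let $\Phi_1^\delta$ be the following method: given $x_1\dots x_n$, put $r=\lfloor \delta T/v\rfloor=\lfloor \delta n\rfloor$ (where $v>0$ is an upper bound on the per-letter encoding time of all $\varphi_i$ and $T=nv$), compute $|\varphi_1(x_1\dots x_r)|,\dots,|\varphi_m(x_1\dots x_r)|$, choose an index $s=s(n)\in\{1,\dots,m\}$ with $|\varphi_s(x_1\dots x_r)|=\min_{1\le i\le m}|\varphi_i(x_1\dots x_r)|$, and output the codeword $\langle s\rangle\,\varphi_s(x_1\dots x_n)$, where $\langle s\rangle$ is a $\lceil\log_2 m\rceil$-bit binary representation of $s$. Thus $|\Phi_1^\delta(x_1\dots x_n)|=\lceil\log_2 m\rceil+|\varphi_{s(n)}(x_1\dots x_n)|$. Then $$\lim_{n\to\infty}\frac{|\Phi_1^\delta(x_1x_2\dots x_n)|}{n}=\min_{i=1,\dots,m}\lim_{n\to\infty}\frac{|\varphi_i(x_1x_2\dots x_n)|}{n},$$ i.e. $\Phi_1^\delta$ is time-universal.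
   Context: $|w|$ denotes the length of a binary word $w$. A compressing method is called time-universal if the limit of its per-letter codeword length equals the infimum over the given compressors of their limiting per-letter codeword lengths. The prefix $x_1\dots x_r$ refers to the given infinite sequence (for $r=0$ it is the empty word). *)

theory Defs
  imports Complex_Main
begin

text \<open>Prefix x_1 ... x_n of an infinite sequence (x is indexed from 0, so x_k = x (k-1)).\<close>
definition prefix :: "(nat \<Rightarrow> 'a) \<Rightarrow> nat \<Rightarrow> 'a list" where
  "prefix x n = map x [0..<n]"

fun bits :: "nat \<Rightarrow> nat \<Rightarrow> bool list" where
  "bits 0 k = []"
| "bits (Suc l) k = odd k # bits l (k div 2)"

definition index_code :: "nat \<Rightarrow> nat \<Rightarrow> bool list" where
  "index_code m s = bits (nat \<lceil>log 2 (real m)\<rceil>) (s - 1)"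

definition trial_len :: "real \<Rightarrow> nat \<Rightarrow> nat" where
  "trial_len \<delta> n = nat \<lfloor>\<delta> * real n\<rfloor>"

definition valid_selection ::
  "nat \<Rightarrow> real \<Rightarrow> (nat \<Rightarrow> 'a list \<Rightarrow> bool list) \<Rightarrow> (nat \<Rightarrow> 'a) \<Rightarrow> (nat \<Rightarrow> nat) \<Rightarrow> bool" where
  "valid_selection m \<delta> \<phi> x s \<longleftrightarrow>
     (\<forall>n. s n \<in> {1..m} \<and>
          length (\<phi> (s n) (prefix x (trial_len \<delta> n))) =
            Min ((\<lambda>i. length (\<phi> i (prefix x (trial_len \<delta> n)))) ` {1..m}))"

definition Phi1 ::
  "nat \<Rightarrow> (nat \<Rightarrow> 'a list \<Rightarrow> bool list) \<Rightarrow> (nat \<Rightarrow> nat) \<Rightarrow> (nat \<Rightarrow> 'a) \<Rightarrow> nat \<Rightarrow> bool list" where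
  "Phi1 m \<phi> s x n = index_code m (s n) @ \<phi> (s n) (prefix x n)"

end

theory Submission
  imports Defs
begin

lemma trial_len_at_top:
  assumes "\<delta> > 0"
  shows "filterlim (trial_len \<delta>) at_top sequentially"
proof (subst filterlim_at_top, intro allI)
  fix Z :: nat
  show "\<forall>\<^sub>F n in sequentially. Z \<le> trial_len \<delta> n"
  proof (rule eventually_sequentiallyI[of "nat \<lceil>(real Z + 1) / \<delta>\<rceil>"])
    fix n assume "nat \<lceil>(real Z + 1) / \<delta>\<rceil> \<le> n"
    hence "(real Z + 1) / \<delta> \<le> real n"
    proof -
      have "(real Z + 1) / \<delta> \<le> real_of_int \<lceil>(real Z + 1) / \<delta>\<rceil>" by (rule le_of_int_ceiling)
      also have "\<dots> \<le> real (nat \<lceil>(real Z + 1) / \<delta>\<rceil>)" by linarith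
      also have "\<dots> \<le> real n" using \<open>nat \<lceil>(real Z + 1) / \<delta>\<rceil> \<le> n\<close> by simp
      finally show ?thesis .
    qed
    hence "real Z + 1 \<le> \<delta> * real n" using assms by (simp add: field_simps)
    hence "real Z \<le> \<lfloor>\<delta> * real n\<rfloor>" by linarith
    thus "Z \<le> trial_len \<delta> n" unfolding trial_len_def by linarith
  qed
qed

lemma length_bits: "length (bits l k) = l"
  by (induct l arbitrary: k) auto

theorem claim1:
  fixes A :: "'a set" and x :: "nat \<Rightarrow> 'a" and m :: nat
    and \<phi> :: "nat \<Rightarrow> 'a list \<Rightarrow> bool list" and \<delta> :: real and s :: "nat \<Rightarrow> nat"
  assumes "finite A" and "\<forall>n. x n \<in> A" and "m \<ge> 1"
    and "\<forall>i\<in>{1..m}. convergent (\<lambda>n. real (length (\<phi> i (prefix x n))) / real n)"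
    and "\<delta> > 0"
    and "valid_selection m \<delta> \<phi> x s"
  shows "(\<lambda>n. real (length (Phi1 m \<phi> s x n)) / real n) \<longlonglongrightarrow>
           Min ((\<lambda>i. lim (\<lambda>n. real (length (\<phi> i (prefix x n))) / real n)) ` {1..m})"
proof -
  define f where "f i n = real (length (\<phi> i (prefix x n))) / real n" for i n
  define L where "L i = lim (f i)" for i
  define \<mu> where "\<mu> = Min (L ` {1..m})"
  define M where "M = {i\<in>{1..m}. L i = \<mu>}"
  define r where "r = trial_len \<delta>"
  have fL: "f i \<longlonglongrightarrow> L i" if "i \<in> {1..m}" for i
    using assms(4) that unfolding f_def L_def by (simp add: convergent_LIMSEQ_iff)
  have ne: "L ` {1..m} \<noteq> {}" using assms(3) by auto
  have muin: "\<mu> \<in> L ` {1..m}" unfolding \<mu>_def using ne by (intro Min_in) auto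
  then obtain k where k: "k \<in> {1..m}" "L k = \<mu>" by auto
  have mule: "\<mu> \<le> L i" if "i \<in> {1..m}" for i unfolding \<mu>_def using that by auto
  have rtop: "filterlim r at_top sequentially" unfolding r_def using trial_len_at_top assms(5) .
  have sel: "\<forall>\<^sub>F n in sequentially. s n \<noteq> j" if j: "j \<in> {1..m} - M" for j
  proof -
    have gt: "L j > \<mu>" using j mule[of j] unfolding M_def by auto
    define e where "e = (L j - \<mu>) / 2"
    have e: "e > 0" using gt unfolding e_def by simp
    have "L j - e = L k + e" using k(2) unfolding e_def by (simp add: field_simps)
    have "\<forall>\<^sub>F n in sequentially. dist (f j n) (L j) < e"
      using fL[of j] j e by (simp add: tendsto_iff)
    moreover have "\<forall>\<^sub>F n in sequentially. dist (f k n) (L k) < e"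
      using fL[of k] k e by (simp add: tendsto_iff)
    ultimately have ev: "\<forall>\<^sub>F n in sequentially. f k n < f j n \<and> n > 0"
      using eventually_gt_at_top[of 0]
    proof eventually_elim
      case (elim n)
      then show ?case unfolding dist_real_def using \<open>L j - e = L k + e\<close> by (simp add: abs_less_iff)
    qed
    have "\<forall>\<^sub>F n in sequentially. f k (r n) < f j (r n) \<and> r n > 0"
      using filterlim_iff[THEN iffD1, OF rtop] ev by blast
    thus ?thesis
    proof eventually_elim
      case (elim n)
      have "length (\<phi> k (prefix x (r n))) < length (\<phi> j (prefix x (r n)))"
        using elim unfolding f_def by (simp add: divide_less_cancel)
      moreover have "length (\<phi> (s n) (prefix x (r n))) \<le> length (\<phi> k (prefix x (r n)))"
        using assms(6) k(1) unfolding valid_selection_def r_def by auto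
      ultimately show ?case by auto
    qed
  qed
  have selM: "\<forall>\<^sub>F n in sequentially. \<forall>j\<in>{1..m} - M. s n \<noteq> j"
    using sel by (subst eventually_ball_finite_distrib) auto
  have sM: "\<forall>\<^sub>F n in sequentially. s n \<in> M"
    using selM by eventually_elim (use assms(6) in \<open>auto simp: valid_selection_def\<close>)
  have main: "(\<lambda>n. f (s n) n) \<longlonglongrightarrow> \<mu>"
  proof (rule tendstoI)
    fix e :: real assume e: "e > 0"
    have "\<forall>\<^sub>F n in sequentially. \<forall>i\<in>M. dist (f i n) \<mu> < e"
    proof (subst eventually_ball_finite_distrib)
      show "finite M" unfolding M_def by auto
      show "\<forall>i\<in>M. \<forall>\<^sub>F n in sequentially. dist (f i n) \<mu> < e"
        using fL e unfolding M_def by (auto simp: tendsto_iff)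
    qed
    with sM show "\<forall>\<^sub>F n in sequentially. dist (f (s n) n) \<mu> < e"
      by eventually_elim auto
  qed
  define c where "c = real (length (index_code m 0))"
  have clen: "real (length (index_code m i)) = c" for i
    unfolding c_def index_code_def by (simp add: length_bits)
  have "(\<lambda>n. c / real n + f (s n) n) \<longlonglongrightarrow> 0 + \<mu>"
    by (intro tendsto_add main tendsto_divide_0[OF tendsto_const] filterlim_at_top_imp_at_infinity[OF filterlim_real_sequentially])
  moreover have "real (length (Phi1 m \<phi> s x n)) / real n = c / real n + f (s n) n" for n
    unfolding Phi1_def f_def using clen[of "s n"] by (simp add: add_divide_distrib)
  ultimately show ?thesis unfolding \<mu>_def L_def f_def by simp
qed

end
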